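(* For integers $k,l\ge 0$ define \[A(k,l)=\{(x_1,\dots,x_k)\in\mathbb{Z}^k:1\le x_1<\cdots<x_k,\ x_1+\cdots+x_k=l\},\] \[B(k,l)=\{(x_1,\dots,x_k)\in\mathbb{Z}^k:0\le x_1<\cdots<x_k,\ x_1+\cdots+x_k=l\}.\] Then for every integer $n\ge0$, \[p(n)=\sum_{0\le k\le l\le n}|A(k,l)|\,|B(k,n-l)|=\sum_{0\le k\le l\le n}|B(k,l-k)|\,|B(k,n-l)|,\] where $p(n)$ is the number of partitions of $n$.
   Context: For $k=0$ the sets $A(0,l)$ and $B(0,l)$ consist of the empty tuple if $l=0$ and are empty otherwise. $p(0)=1$. *)

theory Defs
  imports Main "HOL-Library.Multiset"
begin

definition setA :: "nat \<Rightarrow> nat \<Rightarrow> int list set" where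
  "setA k l = {xs. length xs = k \<and> sorted_wrt (<) xs \<and> (\<forall>i<k. 1 \<le> xs ! i) \<and> sum_list xs = int l}"

definition setB :: "nat \<Rightarrow> nat \<Rightarrow> int list set" where
  "setB k l = {xs. length xs = k \<and> sorted_wrt (<) xs \<and> (\<forall>i<k. 0 \<le> xs ! i) \<and> sum_list xs = int l}"

definition partition_count :: "nat \<Rightarrow> nat" where
  "partition_count n = card {M :: nat multiset. (\<forall>x\<in>#M. 0 < x) \<and> sum_mset M = n}"

end

theory Submission
  imports Defs
begin


function frob :: "nat list \<Rightarrow> nat list \<times> nat list" where
  "frob [] = ([],[])"
| "frob (x#xs) = (case frob (map (\<lambda>y. y - 1) (filter (\<lambda>y. 2 \<le> y) xs)) of (as,bs) \<Rightarrow> ((x-1) # as, length xs # bs))"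
  by pat_completeness auto
termination by (relation "measure length") (auto simp: le_imp_less_Suc length_filter_le)

fun unfrob :: "nat list \<Rightarrow> nat list \<Rightarrow> nat list" where
  "unfrob [] bs = []"
| "unfrob (a#as) [] = []"
| "unfrob (a#as) (b#bs) = (let m = unfrob as bs in Suc a # map Suc m @ replicate (b - length m) 1)"

definition dsc :: "nat list \<Rightarrow> bool" where
  "dsc l \<longleftrightarrow> sorted_wrt (\<ge>) l \<and> (\<forall>x\<in>set l. 0 < x)"

definition frobOK :: "nat list \<Rightarrow> nat list \<Rightarrow> bool" where
  "frobOK as bs \<longleftrightarrow> sorted_wrt (>) as \<and> sorted_wrt (>) bs \<and> length as = length bs"

lemma sum_shift: "(\<forall>y\<in>set xs. 0 < (y::nat)) \<Longrightarrow>
   sum_list (map (\<lambda>y. y - 1) (filter (\<lambda>y. 2 \<le> y) xs)) + length xs = sum_list xs"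
  by (induction xs) auto

lemma len_shift: "length (map (\<lambda>y. y - 1) (filter (\<lambda>y. 2 \<le> y) xs)) \<le> length xs"
  by (simp add: length_filter_le)

lemma dsc_shift: "dsc (x#xs) \<Longrightarrow> dsc (map (\<lambda>y. y - 1) (filter (\<lambda>y. 2 \<le> y) xs))
   \<and> (\<forall>y\<in>set (map (\<lambda>y. y - 1) (filter (\<lambda>y. 2 \<le> y) xs)). y \<le> x - 1)"
  unfolding dsc_def
  by (auto simp: sorted_wrt_map sorted_wrt_filter intro: sorted_wrt_mono_rel[of _ "(\<ge>)"])

lemma F1: "dsc l \<Longrightarrow> (\<forall>x\<in>set l. x \<le> \<alpha>) \<Longrightarrow> length l \<le> \<beta> \<Longrightarrow> frob l = (as,bs) \<Longrightarrow>
  frobOK as bs \<and> (\<forall>y\<in>set as. y < \<alpha>) \<and> (\<forall>y\<in>set bs. y < \<beta>) \<and> sum_list as + sum_list bs + length as = sum_list l"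
proof (induction l arbitrary: \<alpha> \<beta> as bs rule: frob.induct)
  case 1
  then show ?case by (auto simp: frobOK_def)
next
  case (2 x xs)
  define m where "m = map (\<lambda>y. y - 1) (filter (\<lambda>y. 2 \<le> y) xs)"
  obtain as' bs' where fm: "frob m = (as',bs')" by force
  have dm: "dsc m" "\<forall>y\<in>set m. y \<le> x - 1" using dsc_shift[OF "2.prems"(1)] m_def by auto
  have lm: "length m \<le> length xs" using len_shift m_def by simp
  have IH: "frobOK as' bs' \<and> (\<forall>y\<in>set as'. y < x - 1) \<and> (\<forall>y\<in>set bs'. y < length xs)
     \<and> sum_list as' + sum_list bs' + length as' = sum_list m"
    using "2.IH"[folded m_def, OF dm(1) dm(2) lm] fm by auto
  have e: "as = (x-1) # as'" "bs = length xs # bs'" using "2.prems"(4) fm m_def by auto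
  have xpos: "0 < x" "x \<le> \<alpha>" using "2.prems"(1,2) by (auto simp: dsc_def)
  have xsp: "\<forall>y\<in>set xs. 0 < y" using "2.prems"(1) by (auto simp: dsc_def)
  have sm: "sum_list m + length xs = sum_list xs" using sum_shift[OF xsp] m_def by simp
  show ?case using IH e xpos "2.prems"(3) sm by (auto simp: frobOK_def)
qed

lemma filt_rep: "dsc xs \<Longrightarrow> filter (\<lambda>y. 2 \<le> y) xs @ replicate (length xs - length (filter (\<lambda>y. 2 \<le> y) xs)) 1 = xs"
proof (induction xs)
  case Nil then show ?case by simp
next
  case (Cons y ys)
  have d: "dsc ys" using Cons.prems by (auto simp: dsc_def)
  show ?case
  proof (cases "2 \<le> y")
    case True
    have "length ys - length (filter (\<lambda>y. 2 \<le> y) ys) = Suc (length ys) - Suc (length (filter (\<lambda>y. 2 \<le> y) ys))" by simp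
    then show ?thesis using True Cons.IH[OF d] by simp
  next
    case False
    then have y1: "y = 1" using Cons.prems by (auto simp: dsc_def)
    then have all1: "\<forall>z\<in>set ys. z = 1" using Cons.prems by (force simp: dsc_def)
    then have "filter (\<lambda>y. 2 \<le> y) ys = []" by (auto simp: filter_empty_conv)
    then show ?thesis using y1 replicate_length_same[OF all1] by simp
  qed
qed

lemma R1: "dsc l \<Longrightarrow> unfrob (fst (frob l)) (snd (frob l)) = l"
proof (induction l rule: frob.induct)
  case 1 then show ?case by simp
next
  case (2 x xs)
  define m where "m = map (\<lambda>y. y - 1) (filter (\<lambda>y. 2 \<le> y) xs)"
  obtain as' bs' where fm: "frob m = (as',bs')" by force
  have dm: "dsc m" using dsc_shift[OF "2.prems"(1)] m_def by auto
  have IH: "unfrob as' bs' = m" using "2.IH"[folded m_def, OF dm] fm by auto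
  have xpos: "0 < x" using "2.prems" by (auto simp: dsc_def)
  have ms: "map Suc m = filter (\<lambda>y. 2 \<le> y) xs" unfolding m_def by (induction xs) auto
  have lm: "length m = length (filter (\<lambda>y. 2 \<le> y) xs)" using m_def by simp
  have dxs: "dsc xs" using "2.prems" by (auto simp: dsc_def)
  show ?case using fm m_def IH xpos ms lm filt_rep[OF dxs] by (simp add: Let_def)
qed

lemma sorted_rep: "sorted_wrt (\<lambda>x y. y \<le> (x::nat)) (replicate n c)"
  by (induction n) auto

lemma U1: "frobOK as bs \<Longrightarrow> (\<forall>y\<in>set as. y < \<alpha>) \<Longrightarrow> (\<forall>y\<in>set bs. y < \<beta>) \<Longrightarrow>
  dsc (unfrob as bs) \<and> (\<forall>x\<in>set (unfrob as bs). x \<le> \<alpha>) \<and> length (unfrob as bs) \<le> \<beta>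
  \<and> sum_list (unfrob as bs) = sum_list as + sum_list bs + length as \<and> frob (unfrob as bs) = (as,bs)"
proof (induction as bs arbitrary: \<alpha> \<beta> rule: unfrob.induct)
  case (1 bs) then show ?case by (auto simp: dsc_def frobOK_def)
next
  case (2 a as) then show ?case by (auto simp: frobOK_def)
next
  case (3 a as b bs)
  define m where "m = unfrob as bs"
  have ok: "frobOK as bs" "\<forall>y\<in>set as. y < a" "\<forall>y\<in>set bs. y < b"
    using "3.prems"(1) by (auto simp: frobOK_def)
  have IH: "dsc m \<and> (\<forall>x\<in>set m. x \<le> a) \<and> length m \<le> b
    \<and> sum_list m = sum_list as + sum_list bs + length as \<and> frob m = (as,bs)"
    using "3.IH"[OF ok] m_def by simp
  define r where "r = map Suc m @ replicate (b - length m) 1"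
  have u: "unfrob (a#as) (b#bs) = Suc a # r" by (simp add: m_def r_def Let_def)
  have mpos: "\<forall>x\<in>set m. 0 < x" using IH by (auto simp: dsc_def)
  have d: "dsc (Suc a # r)" using IH unfolding r_def dsc_def
    by (auto simp: sorted_wrt_append sorted_wrt_map sorted_rep)
  have f: "filter (\<lambda>y. 2 \<le> y) r = map Suc m" unfolding r_def using mpos
    by (induction m) auto
  have mm: "map (\<lambda>y. y - 1) (map Suc m) = m" by (induction m) auto
  have lr: "length r = b" using IH r_def by simp
  have fr: "frob (Suc a # r) = (a#as, b#bs)" using f mm lr IH by simp
  have sr: "sum_list r = sum_list m + length m + (b - length m)" unfolding r_def
    by (simp add: sum_list_Suc sum_list_replicate)
  show ?case unfolding u using d fr sr IH lr "3.prems"(2,3) ok(1)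
    by (auto simp: frobOK_def r_def)
qed


definition PartSet :: "nat \<Rightarrow> nat list set" where
  "PartSet n = {l. dsc l \<and> sum_list l = n}"

definition FrobSet :: "nat \<Rightarrow> (nat list \<times> nat list) set" where
  "FrobSet n = {(as,bs). frobOK as bs \<and> sum_list as + sum_list bs + length as = n}"

lemma card_Part_Frob: "card (PartSet n) = card (FrobSet n)"
proof -
  have "bij_betw frob (PartSet n) (FrobSet n)"
  proof (rule bij_betw_byWitness[where f' = "\<lambda>(as,bs). unfrob as bs"])
    show "\<forall>a\<in>PartSet n. (\<lambda>(as,bs). unfrob as bs) (frob a) = a"
    proof
      fix a assume "a \<in> PartSet n"
      then have "unfrob (fst (frob a)) (snd (frob a)) = a" using R1 by (auto simp: PartSet_def)
      then show "(\<lambda>(as,bs). unfrob as bs) (frob a) = a" by (simp add: case_prod_beta)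
    qed
    show "\<forall>a'\<in>FrobSet n. frob ((\<lambda>(as,bs). unfrob as bs) a') = a'"
    proof
      fix p assume "p \<in> FrobSet n"
      then obtain as bs where ab: "p = (as,bs)" "frobOK as bs" by (auto simp: FrobSet_def)
      have "\<forall>y\<in>set as. y < Suc (sum_list as)" "\<forall>y\<in>set bs. y < Suc (sum_list bs)"
        by (auto simp: le_imp_less_Suc member_le_sum_list)
      from U1[OF ab(2) this] show "frob ((\<lambda>(as,bs). unfrob as bs) p) = p" using ab by simp
    qed
    show "frob ` PartSet n \<subseteq> FrobSet n"
    proof
      fix p assume "p \<in> frob ` PartSet n"
      then obtain l where l: "l \<in> PartSet n" "p = frob l" by auto
      obtain as bs where e: "frob l = (as,bs)" by force
      have "\<forall>x\<in>set l. x \<le> sum_list l" by (simp add: member_le_sum_list)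
      have dl: "dsc l" "sum_list l = n" using l(1) unfolding PartSet_def by auto
      have "frobOK as bs \<and> sum_list as + sum_list bs + length as = sum_list l"
        using F1[OF dl(1) \<open>\<forall>x\<in>set l. x \<le> sum_list l\<close> order_refl e] by blast
      then show "p \<in> FrobSet n" using l(2) e dl(2) unfolding FrobSet_def by simp
    qed
    show "(\<lambda>(as,bs). unfrob as bs) ` FrobSet n \<subseteq> PartSet n"
    proof
      fix l assume "l \<in> (\<lambda>(as,bs). unfrob as bs) ` FrobSet n"
      then obtain as bs where ab: "(as,bs) \<in> FrobSet n" "l = unfrob as bs" by auto
      have "\<forall>y\<in>set as. y < Suc (sum_list as)" "\<forall>y\<in>set bs. y < Suc (sum_list bs)"
        by (auto simp: le_imp_less_Suc member_le_sum_list)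
      have ok: "frobOK as bs" "sum_list as + sum_list bs + length as = n" using ab(1) unfolding FrobSet_def by auto
      have "dsc (unfrob as bs) \<and> sum_list (unfrob as bs) = sum_list as + sum_list bs + length as"
        using U1[OF ok(1) \<open>\<forall>y\<in>set as. y < Suc (sum_list as)\<close> \<open>\<forall>y\<in>set bs. y < Suc (sum_list bs)\<close>] by blast
      then show "l \<in> PartSet n" using ab(2) ok(2) unfolding PartSet_def by simp
    qed
  qed
  then show ?thesis by (rule bij_betw_same_card)
qed

lemma card_Part_mset: "partition_count n = card (PartSet n)"
proof -
  have "bij_betw mset (PartSet n) {M :: nat multiset. (\<forall>x\<in>#M. 0 < x) \<and> sum_mset M = n}"
  proof (rule bij_betw_byWitness[where f' = "\<lambda>M. rev (sorted_list_of_multiset M)"])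
    show "\<forall>a\<in>PartSet n. rev (sorted_list_of_multiset (mset a)) = a"
    proof
      fix a assume "a \<in> PartSet n"
      then have "sorted (rev a)" by (auto simp: PartSet_def dsc_def sorted_wrt_rev)
      then have "sort a = rev a" by (intro properties_for_sort) auto
      then show "rev (sorted_list_of_multiset (mset a)) = a" by simp
    qed
    show "\<forall>a'\<in>{M. (\<forall>x\<in>#M. 0 < x) \<and> sum_mset M = n}. mset (rev (sorted_list_of_multiset a')) = a'"
      by simp
    show "mset ` PartSet n \<subseteq> {M. (\<forall>x\<in>#M. 0 < x) \<and> sum_mset M = n}"
      by (auto simp: PartSet_def dsc_def sum_mset_sum_list)
    show "(\<lambda>M. rev (sorted_list_of_multiset M)) ` {M. (\<forall>x\<in>#M. 0 < x) \<and> sum_mset M = n} \<subseteq> PartSet n"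
    proof
      fix l assume "l \<in> (\<lambda>M. rev (sorted_list_of_multiset M)) ` {M. (\<forall>x\<in>#M. 0 < x) \<and> sum_mset M = n}"
      then obtain M where M: "\<forall>x\<in>#M. 0 < x" "sum_mset M = n" "l = rev (sorted_list_of_multiset M)" by auto
      have s: "sorted (sorted_list_of_multiset M)" by simp
      have "sum_list (sorted_list_of_multiset M) = sum_mset M"
        by (metis mset_sorted_list_of_multiset sum_mset_sum_list)
      then show "l \<in> PartSet n" using M s
        unfolding PartSet_def dsc_def by (auto simp: sorted_wrt_rev)
    qed
  qed
  from bij_betw_same_card[OF this] show ?thesis unfolding partition_count_def by simp
qed


lemma setB_alt: "setB k l = {xs. length xs = k \<and> sorted_wrt (<) xs \<and> (\<forall>x\<in>set xs. 0 \<le> x) \<and> sum_list xs = int l}"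
  unfolding setB_def by (auto simp: all_set_conv_all_nth)

lemma setA_alt: "setA k l = {xs. length xs = k \<and> sorted_wrt (<) xs \<and> (\<forall>x\<in>set xs. 1 \<le> x) \<and> sum_list xs = int l}"
  unfolding setA_def by (auto simp: all_set_conv_all_nth)

lemma mem_le_int: "(\<forall>x\<in>set xs. 0 \<le> (x::int)) \<Longrightarrow> y \<in> set xs \<Longrightarrow> y \<le> sum_list xs"
  using member_le_sum_list[of y xs] by blast

lemma sw_m1: "sorted_wrt (<) (map (\<lambda>i. i - 1) (xs::int list)) = sorted_wrt (<) xs"
  by (induction xs) auto

lemma sw_p1: "sorted_wrt (<) (map (\<lambda>i. i + 1) (xs::int list)) = sorted_wrt (<) xs"
  by (induction xs) auto

lemma finB: "finite (setB k l)"
proof (rule finite_subset)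
  show "setB k l \<subseteq> {xs. set xs \<subseteq> {0..int l} \<and> length xs = k}"
    unfolding setB_alt by auto (metis mem_le_int)
  show "finite {xs. set xs \<subseteq> {0..int l} \<and> length xs = k}" by (rule finite_lists_length_eq) simp
qed

lemma finA: "finite (setA k l)"
proof (rule finite_subset)
  show "setA k l \<subseteq> setB k l"
    unfolding setB_alt setA_alt by force
qed (rule finB)

lemma sum_m1: "sum_list (map (\<lambda>i. i - 1) (xs::int list)) = sum_list xs - int (length xs)"
  by (induction xs) auto

lemma sum_p1: "sum_list (map (\<lambda>i. i + 1) (xs::int list)) = sum_list xs + int (length xs)"
  by (induction xs) auto

lemma card_AB: "k \<le> l \<Longrightarrow> card (setA k l) = card (setB k (l - k))"
proof -
  assume kl: "k \<le> l"
  have "bij_betw (map (\<lambda>i. i - 1)) (setA k l) (setB k (l - k))"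
  proof (rule bij_betw_byWitness[where f' = "map (\<lambda>i. i + 1)"])
    show "\<forall>a\<in>setA k l. map (\<lambda>i. i + 1) (map (\<lambda>i. i - 1) a) = a" by (simp add: map_idI)
    show "\<forall>a\<in>setB k (l - k). map (\<lambda>i. i - 1) (map (\<lambda>i. i + 1) a) = a" by (simp add: map_idI)
    show "map (\<lambda>i. i - 1) ` setA k l \<subseteq> setB k (l - k)"
      using kl unfolding setA_alt setB_alt by (force simp: sw_m1 sum_m1)
    show "map (\<lambda>i. i + 1) ` setB k (l - k) \<subseteq> setA k l"
      using kl unfolding setA_alt setB_alt by (auto simp: sw_p1 sum_p1)
  qed
  then show ?thesis by (rule bij_betw_same_card)
qed


definition SS :: "nat \<Rightarrow> (int list \<times> int list) set" where
  "SS n = (\<Union>l\<in>{..n}. \<Union>k\<in>{..l}. setA k l \<times> setB k (n - l))"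

lemma card_SS: "card (SS n) = (\<Sum>l\<le>n. \<Sum>k\<le>l. card (setA k l) * card (setB k (n - l)))"
proof -
  have fin: "\<And>l. finite (\<Union>k\<in>{..l}. setA k l \<times> setB k (n - l))"
    using finA finB by blast
  have inner: "\<And>l. card (\<Union>k\<in>{..l}. setA k l \<times> setB k (n - l)) = (\<Sum>k\<le>l. card (setA k l) * card (setB k (n - l)))"
  proof -
    fix l
    have "card (\<Union>k\<in>{..l}. setA k l \<times> setB k (n - l)) = (\<Sum>k\<le>l. card (setA k l \<times> setB k (n - l)))"
      by (rule card_UN_disjoint) (auto simp: finA finB, auto simp: setA_def)
    then show "card (\<Union>k\<in>{..l}. setA k l \<times> setB k (n - l)) = (\<Sum>k\<le>l. card (setA k l) * card (setB k (n - l)))"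
      by (simp add: card_cartesian_product)
  qed
  have "card (SS n) = (\<Sum>l\<le>n. card (\<Union>k\<in>{..l}. setA k l \<times> setB k (n - l)))"
    unfolding SS_def by (rule card_UN_disjoint) (use fin in \<open>auto simp: setA_def\<close>)
  then show ?thesis using inner by simp
qed

lemma s_p1: "sum_list (map (\<lambda>a. int a + 1) as) = int (sum_list as) + int (length as)"
  by (induction as) auto

lemma s_int: "sum_list (map int bs) = int (sum_list bs)"
  by (induction bs) auto

lemma s_m1: "(\<forall>i\<in>set x. 1 \<le> i) \<Longrightarrow> int (sum_list (map (\<lambda>i. nat (i - 1)) x)) = sum_list x - int (length x)"
  by (induction x) auto

lemma s_nat: "(\<forall>i\<in>set y. 0 \<le> i) \<Longrightarrow> int (sum_list (map nat y)) = sum_list y"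
  by (induction y) auto

lemma card_Frob_SS: "card (FrobSet n) = card (SS n)"
proof -
  let ?h' = "\<lambda>(as,bs). (rev (map (\<lambda>a. int a + 1) as), rev (map int bs))"
  let ?h = "\<lambda>(x,y). (map (\<lambda>i. nat (i - 1)) (rev x), map nat (rev y))"
  have "bij_betw ?h' (FrobSet n) (SS n)"
  proof (rule bij_betw_byWitness[where f' = ?h])
    show "\<forall>a\<in>FrobSet n. ?h (?h' a) = a" by (auto simp: rev_map comp_def)
    show "\<forall>a'\<in>SS n. ?h' (?h a') = a'"
    proof
      fix a' assume "a' \<in> SS n"
      then obtain x y k l where e: "a' = (x,y)" "x \<in> setA k l" "y \<in> setB k (n - l)"
        unfolding SS_def by blast
      have x1: "\<forall>i\<in>set x. 1 \<le> i" using e(2) unfolding setA_alt by blast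
      have y0: "\<forall>i\<in>set y. 0 \<le> i" using e(3) unfolding setB_alt by blast
      have "map (\<lambda>a. int (nat (a - 1)) + 1) x = x" using x1 by (intro map_idI) auto
      moreover have "map (\<lambda>a. int (nat a)) y = y" using y0 by (intro map_idI) auto
      ultimately show "?h' (?h a') = a'" using e(1) by (simp add: rev_map comp_def)
    qed
    show "?h' ` FrobSet n \<subseteq> SS n"
    proof
      fix p assume "p \<in> ?h' ` FrobSet n"
      then obtain as bs where ab: "p = ?h' (as,bs)" "frobOK as bs" "sum_list as + sum_list bs + length as = n"
        unfolding FrobSet_def by auto
      define l where "l = sum_list as + length as"
      define k where "k = length as"
      have "rev (map (\<lambda>a. int a + 1) as) \<in> setA k l"
        using ab(2) unfolding setA_alt frobOK_def k_def l_def
        by (auto simp: sorted_wrt_rev sorted_wrt_map s_p1 elim!: sorted_wrt_mono_rel[rotated])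
      moreover have "rev (map int bs) \<in> setB k (n - l)"
        using ab(2,3) unfolding setB_alt frobOK_def k_def l_def
        by (auto simp: sorted_wrt_rev sorted_wrt_map s_int)
      moreover have "l \<le> n" "k \<le> l" using ab(3) l_def k_def by auto
      ultimately show "p \<in> SS n" unfolding SS_def using ab(1) by auto
    qed
    show "?h ` SS n \<subseteq> FrobSet n"
    proof
      fix p assume "p \<in> ?h ` SS n"
      then obtain x y k l where e: "p = ?h (x,y)" "x \<in> setA k l" "y \<in> setB k (n - l)" "l \<le> n"
        unfolding SS_def by blast
      have x1: "\<forall>i\<in>set x. 1 \<le> i" "sorted_wrt (<) x" "length x = k" "sum_list x = int l"
        using e(2) unfolding setA_alt by auto
      have y0: "\<forall>i\<in>set y. 0 \<le> i" "sorted_wrt (<) y" "length y = k" "sum_list y = int (n - l)"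
        using e(3) unfolding setB_alt by auto
      have sa: "sorted_wrt (>) (map (\<lambda>i. nat (i - 1)) (rev x))"
        unfolding sorted_wrt_map sorted_wrt_rev
        by (rule sorted_wrt_mono_rel[OF _ x1(2)]) (use x1(1) in auto)
      have sb: "sorted_wrt (>) (map nat (rev y))"
        unfolding sorted_wrt_map sorted_wrt_rev
        by (rule sorted_wrt_mono_rel[OF _ y0(2)]) (use y0(1) in auto)
      have s1: "int (sum_list (map (\<lambda>i. nat (i - 1)) (rev x))) = int l - int k"
        using s_m1[of "rev x"] x1 by simp
      have s2: "int (sum_list (map nat (rev y))) = int n - int l"
        using s_nat[of "rev y"] y0 e(4) by simp
      have "int (sum_list (map (\<lambda>i. nat (i - 1)) (rev x)) + sum_list (map nat (rev y)) + length (map (\<lambda>i. nat (i - 1)) (rev x))) = int n"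
        using s1 s2 x1(3) by simp
      then have "sum_list (map (\<lambda>i. nat (i - 1)) (rev x)) + sum_list (map nat (rev y)) + length (map (\<lambda>i. nat (i - 1)) (rev x)) = n"
        by linarith
      then show "p \<in> FrobSet n" using e(1) sa sb x1(3) y0(3) unfolding FrobSet_def frobOK_def by simp
    qed
  qed
  then show ?thesis by (rule bij_betw_same_card)
qed

theorem lemma3p2:
  fixes n :: nat
  shows "partition_count n = (\<Sum>l\<le>n. \<Sum>k\<le>l. card (setA k l) * card (setB k (n - l)))
       \<and> partition_count n = (\<Sum>l\<le>n. \<Sum>k\<le>l. card (setB k (l - k)) * card (setB k (n - l)))"
proof
  show 1: "partition_count n = (\<Sum>l\<le>n. \<Sum>k\<le>l. card (setA k l) * card (setB k (n - l)))"
    using card_Part_mset card_Part_Frob card_Frob_SS card_SS by simp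
  have "(\<Sum>l\<le>n. \<Sum>k\<le>l. card (setA k l) * card (setB k (n - l)))
      = (\<Sum>l\<le>n. \<Sum>k\<le>l. card (setB k (l - k)) * card (setB k (n - l)))"
    by (intro sum.cong refl) (simp add: card_AB)
  then show "partition_count n = (\<Sum>l\<le>n. \<Sum>k\<le>l. card (setB k (l - k)) * card (setB k (n - l)))"
    using 1 by simp
qed

end
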